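(* Let $\zeta>0$ and let $G=(\mathcal{Y},E,f)$ be a curl consistent weighted digraph. Then there exists a weighted digraph $G'=(\mathcal{Y}\cup\mathcal{Y}',E',f')$ with $\mathcal{Y}'\cap\mathcal{Y}=\emptyset$ and $E\cap E'=\emptyset$ such that (1) for every $e=(C^{(i)},C^{(j)})\in E$, the synthetic expert between $C^{(i)}$ and $C^{(j)}$ in $G'$ is $\zeta$-accurate and $f(e)$ lies in its bound interval $(L_{G'}(i,j),U_{G'}(i,j))$; and (2) $G'$ is curl consistent.
   Context: A weighted digraph $H=(V,E_H,h)$ has $E_H$ a set of ordered pairs of distinct vertices and $h:E_H\to\mathbb{R}$, extended by $h(b,a)=1-h(a,b)$; edges may be traversed in either direction with this convention. A cycle is a sequence of $\ell\ge3$ pairwise distinct vertices $(c_1,\dots,c_\ell)$ with consecutive pairs and $(c_\ell,c_1)$ edges (either direction); its curl is $h(c_\ell,c_1)+\sum_{t<\ell}h(c_t,c_{t+1})$. $H$ is curl consistent if every cycle of length $\ell$ has curl strictly between $1$ and $\ell-1$. A path is a sequence of pairwise distinct vertices with consecutive pairs edges; its weight $W(H,B)$ is the sum of $h$ over its consecutive pairs. For vertices $a,b$ with neither $(a,b)$ nor $(b,a)$ an edge of $H$, let $U_H(a,b)=\min W(H,B)$ over paths $B$ from $a$ to $b$ and $L_H(a,b)=1-\min W(H,\overline{B})$ over paths $\overline{B}$ from $b$ to $a$ (minimum over the empty set is $+\infty$); the synthetic expert between $a$ and $b$ is called $\zeta$-accurate if $U_H(a,b)-L_H(a,b)\le\zeta$,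 i.e. its bound interval is contained in $(L,L+\zeta]$ for some $L$. *)

theory Defs
  imports Complex_Main "HOL-Library.Extended_Real"
begin

definition wdigraph :: "'a set \<Rightarrow> ('a \<times> 'a) set \<Rightarrow> bool" where
  "wdigraph V E \<longleftrightarrow> finite V \<and> E \<subseteq> V \<times> V \<and>
     (\<forall>(a,b)\<in>E. a \<noteq> b \<and> (b,a) \<notin> E)"

definition adj :: "('a \<times> 'a) set \<Rightarrow> 'a \<Rightarrow> 'a \<Rightarrow> bool" where
  "adj E a b \<longleftrightarrow> (a,b) \<in> E \<or> (b,a) \<in> E"

definition hx :: "('a \<times> 'a) set \<Rightarrow> ('a \<Rightarrow> 'a \<Rightarrow> real) \<Rightarrow> 'a \<Rightarrow> 'a \<Rightarrow> real" where
  "hx E h a b = (if (a,b) \<in> E then h a b else 1 - h b a)"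

definition is_cycle :: "('a \<times> 'a) set \<Rightarrow> 'a list \<Rightarrow> bool" where
  "is_cycle E cs \<longleftrightarrow> length cs \<ge> 3 \<and> distinct cs \<and>
     (\<forall>i<length cs. adj E (cs!i) (cs!((i+1) mod length cs)))"

definition curl :: "('a \<times> 'a) set \<Rightarrow> ('a \<Rightarrow> 'a \<Rightarrow> real) \<Rightarrow> 'a list \<Rightarrow> real" where
  "curl E h cs = (\<Sum>i<length cs. hx E h (cs!i) (cs!((i+1) mod length cs)))"

definition curl_consistent :: "('a \<times> 'a) set \<Rightarrow> ('a \<Rightarrow> 'a \<Rightarrow> real) \<Rightarrow> bool" where
  "curl_consistent E h \<longleftrightarrow>
     (\<forall>cs. is_cycle E cs \<longrightarrow> 1 < curl E h cs \<and> curl E h cs < real (length cs) - 1)"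

definition is_path :: "('a \<times> 'a) set \<Rightarrow> 'a list \<Rightarrow> bool" where
  "is_path E xs \<longleftrightarrow> xs \<noteq> [] \<and> distinct xs \<and>
     (\<forall>i. i + 1 < length xs \<longrightarrow> adj E (xs!i) (xs!(i+1)))"

definition path_weight :: "('a \<times> 'a) set \<Rightarrow> ('a \<Rightarrow> 'a \<Rightarrow> real) \<Rightarrow> 'a list \<Rightarrow> real" where
  "path_weight E h xs = (\<Sum>i<length xs - 1. hx E h (xs!i) (xs!(i+1)))"

definition paths_between :: "('a \<times> 'a) set \<Rightarrow> 'a \<Rightarrow> 'a \<Rightarrow> 'a list set" where
  "paths_between E a b = {xs. is_path E xs \<and> hd xs = a \<and> last xs = b}"

text \<open>Upper and lower bounds of the synthetic expert (min over the empty set is +infinity).\<close>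

definition U_bound :: "('a \<times> 'a) set \<Rightarrow> ('a \<Rightarrow> 'a \<Rightarrow> real) \<Rightarrow> 'a \<Rightarrow> 'a \<Rightarrow> ereal" where
  "U_bound E h a b = (INF xs\<in>paths_between E a b. ereal (path_weight E h xs))"

definition L_bound :: "('a \<times> 'a) set \<Rightarrow> ('a \<Rightarrow> 'a \<Rightarrow> real) \<Rightarrow> 'a \<Rightarrow> 'a \<Rightarrow> ereal" where
  "L_bound E h a b = 1 - (INF xs\<in>paths_between E b a. ereal (path_weight E h xs))"

text \<open>The synthetic expert between a and b exists (no edge between a and b in either
  direction) and is zeta-accurate.\<close>

definition zeta_accurate :: "('a \<times> 'a) set \<Rightarrow> ('a \<Rightarrow> 'a \<Rightarrow> real) \<Rightarrow> real \<Rightarrow> 'a \<Rightarrow> 'a \<Rightarrow> bool" where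
  "zeta_accurate E h \<zeta> a b \<longleftrightarrow> \<not> adj E a b \<and> U_bound E h a b - L_bound E h a b \<le> ereal \<zeta>"

end

theory Submission
  imports Defs
begin

fun pw :: "('a \<times> 'a) set \<Rightarrow> ('a \<Rightarrow> 'a \<Rightarrow> real) \<Rightarrow> 'a list \<Rightarrow> real" where
  "pw E h (x # y # zs) = hx E h x y + pw E h (y # zs)"
| "pw E h _ = 0"

lemma succ_nth: "(\<forall>i. i + 1 < length xs \<longrightarrow> P (xs!i) (xs!(i+1))) \<longleftrightarrow> successively P xs"
proof (induction xs rule: induct_list012)
  case (3 x y xs)
  have "(\<forall>i. i + 1 < length (x#y#xs) \<longrightarrow> P ((x#y#xs)!i) ((x#y#xs)!(i+1))) \<longleftrightarrow>
        P x y \<and> (\<forall>i. i + 1 < length (y#xs) \<longrightarrow> P ((y#xs)!i) ((y#xs)!(i+1)))"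
    (is "?L \<longleftrightarrow> ?R")
  proof
    assume L: ?L
    show ?R
    proof (intro conjI allI impI)
      show "P x y" using L[rule_format, of 0] by simp
      fix i assume "i + 1 < length (y#xs)"
      then show "P ((y#xs)!i) ((y#xs)!(i+1))" using L[rule_format, of "Suc i"] by simp
    qed
  next
    assume R: ?R
    show ?L
    proof (intro allI impI)
      fix i assume i: "i + 1 < length (x#y#xs)"
      show "P ((x#y#xs)!i) ((x#y#xs)!(i+1))"
      proof (cases i)
        case 0 then show ?thesis using R by simp
      next
        case (Suc j) then show ?thesis using R i by simp
      qed
    qed
  qed
  then show ?case using 3 by simp
qed auto

lemma path_weight_pw: "path_weight E h xs = pw E h xs"
proof (induction E h xs rule: pw.induct)
  case (1 E h x y zs)
  have "path_weight E h (x # y # zs) = (\<Sum>i<Suc (length zs). hx E h ((x#y#zs)!i) ((x#y#zs)!(i+1)))"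
    by (simp add: path_weight_def)
  also have "\<dots> = hx E h x y + (\<Sum>i<length zs. hx E h ((y#zs)!i) ((y#zs)!(i+1)))"
    by (subst sum.lessThan_Suc_shift) simp
  also have "\<dots> = hx E h x y + path_weight E h (y # zs)" by (simp add: path_weight_def)
  finally show ?case using 1 by simp
qed (auto simp: path_weight_def)

lemma pw_append: "xs \<noteq> [] \<Longrightarrow> ys \<noteq> [] \<Longrightarrow> pw E h (xs @ ys) = pw E h xs + hx E h (last xs) (hd ys) + pw E h ys"
proof (induction xs rule: induct_list012)
  case (3 x y zs) then show ?case by simp
next
  case (2 x) then show ?case by (cases ys) auto
qed auto

lemma is_path_alt: "is_path E xs \<longleftrightarrow> xs \<noteq> [] \<and> distinct xs \<and> successively (adj E) xs"
  unfolding is_path_def succ_nth by simp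

lemma cyc_lem: "length cs \<ge> 1 \<Longrightarrow> (\<forall>i<length cs. P (cs!i) (cs!((i+1) mod length cs))) \<longleftrightarrow> successively P (cs @ [hd cs])"
proof -
  assume l: "length cs \<ge> 1"
  have "(\<forall>i<length cs. P (cs!i) (cs!((i+1) mod length cs))) \<longleftrightarrow>
        (\<forall>i. i + 1 < length (cs @ [hd cs]) \<longrightarrow> P ((cs @ [hd cs])!i) ((cs @ [hd cs])!(i+1)))"
  proof (intro iffI allI impI)
    fix i assume A: "\<forall>i<length cs. P (cs!i) (cs!((i+1) mod length cs))" and i: "i + 1 < length (cs @ [hd cs])"
    show "P ((cs @ [hd cs])!i) ((cs @ [hd cs])!(i+1))"
    proof (cases "i + 1 < length cs")
      case True then show ?thesis using A[rule_format, of i] by (simp add: nth_append)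
    next
      case False
      then have e: "i + 1 = length cs" using i by simp
      have "cs \<noteq> []" using l by auto
      then have "(cs @ [hd cs])!i = cs!i" "(cs @ [hd cs])!(i+1) = cs!0" "(i+1) mod length cs = 0"
        using e by (auto simp: nth_append hd_conv_nth)
      then show ?thesis using A[rule_format, of i] e by simp
    qed
  next
    fix i assume A: "\<forall>i. i + 1 < length (cs @ [hd cs]) \<longrightarrow> P ((cs @ [hd cs])!i) ((cs @ [hd cs])!(i+1))"
      and i: "i < length cs"
    show "P (cs!i) (cs!((i+1) mod length cs))"
    proof (cases "i + 1 < length cs")
      case True then show ?thesis using A[rule_format, of i] i by (simp add: nth_append)
    next
      case False
      then have e: "i + 1 = length cs" using i by simp
      have "cs \<noteq> []" using l by auto
      then have "(cs @ [hd cs])!i = cs!i" "(cs @ [hd cs])!(i+1) = cs!0" "(i+1) mod length cs = 0"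
        using e by (auto simp: nth_append hd_conv_nth)
      then show ?thesis using A[rule_format, of i] e by simp
    qed
  qed
  then show ?thesis using succ_nth by metis
qed

lemma is_cycle_alt: "is_cycle E cs \<longleftrightarrow> length cs \<ge> 3 \<and> distinct cs \<and> successively (adj E) (cs @ [hd cs])"
  unfolding is_cycle_def using cyc_lem[of cs "adj E"] by auto

lemma curl_pw: "length cs \<ge> 1 \<Longrightarrow> curl E h cs = pw E h (cs @ [hd cs])"
proof -
  assume l: "length cs \<ge> 1"
  have "pw E h (cs @ [hd cs]) = (\<Sum>i<length cs. hx E h ((cs @ [hd cs])!i) ((cs @ [hd cs])!(i+1)))"
    by (simp add: path_weight_pw[symmetric] path_weight_def)
  also have "\<dots> = curl E h cs" unfolding curl_def
  proof (rule sum.cong)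
    fix i assume "i \<in> {..<length cs}"
    then show "hx E h ((cs @ [hd cs])!i) ((cs @ [hd cs])!(i+1)) = hx E h (cs!i) (cs!((i+1) mod length cs))"
    proof (cases "i + 1 < length cs")
      case False
      then have e: "i + 1 = length cs" using \<open>i \<in> {..<length cs}\<close> by simp
      have "cs \<noteq> []" using l by auto
      then have "(cs @ [hd cs])!i = cs!i" "(cs @ [hd cs])!(i+1) = cs!0" "(i+1) mod length cs = 0"
        using e by (auto simp: nth_append hd_conv_nth)
      then show ?thesis by simp
    qed (auto simp: nth_append)
  qed simp
  finally show ?thesis by simp
qed


fun nb :: "'a list \<Rightarrow> bool" where
  "nb (x # y # z # r) = (x \<noteq> z \<and> nb (y # z # r))"
| "nb _ = True"

lemma nb_distinct: "distinct xs \<Longrightarrow> nb xs"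
  by (induction xs rule: nb.induct) auto

lemma nb_app: "distinct xs \<Longrightarrow> (length xs \<ge> 2 \<Longrightarrow> y \<noteq> xs!(length xs - 2)) \<Longrightarrow> nb (xs @ [y])"
proof (induction xs)
  case (Cons a xs)
  have ih: "nb (xs @ [y])"
  proof (rule Cons.IH)
    show "distinct xs" using Cons.prems by simp
    assume "length xs \<ge> 2"
    then show "y \<noteq> xs!(length xs - 2)" using Cons.prems(2)
      by (cases "length xs") auto
  qed
  show ?case
  proof (cases xs)
    case Nil then show ?thesis by simp
  next
    case (Cons b r)
    show ?thesis
    proof (cases r)
      case Nil then show ?thesis using Cons Cons.prems(2) by simp
    next
      case (Cons c r') then show ?thesis using \<open>xs = b # r\<close> Cons.prems(1) ih by auto
    qed
  qed
qed simp

definition ct :: "('a + nat) list \<Rightarrow> 'a list" where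
  "ct xs = map projl (filter isl xs)"

lemma ct_simps [simp]: "ct [] = []" "ct (Inl a # xs) = a # ct xs" "ct (Inr n # xs) = ct xs"
  "ct (xs @ ys) = ct xs @ ct ys"
  by (auto simp: ct_def)

lemma ct_distinct: "distinct xs \<Longrightarrow> distinct (ct xs)"
  unfolding ct_def
proof (rule distinct_map[THEN iffD2], intro conjI)
  show "inj_on projl (set (filter isl xs))"
    by (rule inj_onI) (auto simp: isl_def)
qed simp

lemma hx_sym: "\<forall>(a,b)\<in>E. a \<noteq> b \<and> (b,a) \<notin> E \<Longrightarrow> adj E x y \<Longrightarrow> hx E h x y + hx E h y x = 1"
  unfolding adj_def hx_def by auto

locale gad =
  fixes E :: "('a \<times> 'a) set" and f :: "'a \<Rightarrow> 'a \<Rightarrow> real" and idx :: "'a \<times> 'a \<Rightarrow> nat"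
    and \<epsilon> :: real and E' :: "(('a + nat) \<times> ('a + nat)) set" and f' :: "'a + nat \<Rightarrow> 'a + nat \<Rightarrow> real"
  assumes irr: "\<forall>(a,b)\<in>E. a \<noteq> b \<and> (b,a) \<notin> E"
    and cc: "curl_consistent E f" and eps: "0 < \<epsilon>" "\<epsilon> \<le> 1/4"
    and inj: "inj_on idx E"
    and E'_def: "E' = {(Inl a, Inr n) | a n. \<exists>b. (a,b) \<in> E \<and> n div 2 = idx (a,b)}
                 \<union> {(Inr n, Inl b) | n b. \<exists>a. (a,b) \<in> E \<and> n div 2 = idx (a,b)}"
    and f'_def: "f' = (\<lambda>x y. case x of Inl a \<Rightarrow> (case y of Inr n \<Rightarrow>
          f (fst (inv_into E idx (n div 2))) (snd (inv_into E idx (n div 2))) + (if even n then \<epsilon> else 1 - \<epsilon>)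
          | Inl _ \<Rightarrow> 0) | Inr _ \<Rightarrow> 0)"
begin

lemma edgeL: "(Inl a, Inr n) \<in> E' \<longleftrightarrow> (\<exists>b. (a,b) \<in> E \<and> n div 2 = idx (a,b))"
  and edgeR: "(Inr n, Inl b) \<in> E' \<longleftrightarrow> (\<exists>a. (a,b) \<in> E \<and> n div 2 = idx (a,b))"
  and noLL: "(Inl a, Inl b') \<notin> E'" and noRR: "(Inr n, Inr m) \<notin> E'"
  unfolding E'_def by auto

lemma idx_eq: "(a,b) \<in> E \<Longrightarrow> (c,d) \<in> E \<Longrightarrow> idx (a,b) = idx (c,d) \<Longrightarrow> a = c \<and> b = d"
  using inj unfolding inj_on_def by blast

lemma nbr: "adj E' u (Inr n) \<Longrightarrow> \<exists>a b. (a,b) \<in> E \<and> n div 2 = idx (a,b) \<and> (u = Inl a \<or> u = Inl b)"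
  unfolding adj_def E'_def by auto

lemma f'_val: "(a,b) \<in> E \<Longrightarrow> n div 2 = idx (a,b) \<Longrightarrow>
   f' (Inl a) (Inr n) = f a b + (if even n then \<epsilon> else 1 - \<epsilon>)"
  unfolding f'_def using inv_into_f_f[OF inj, of "(a,b)"] by simp

lemma f'_R: "f' (Inr n) y = 0" unfolding f'_def by simp

lemma mid:
  assumes x: "adj E' x (Inr n)" and y: "adj E' (Inr n) y" and xy: "x \<noteq> y"
  shows "\<exists>a b. x = Inl a \<and> y = Inl b \<and> adj E a b \<and>
     \<epsilon> \<le> hx E' f' x (Inr n) + hx E' f' (Inr n) y - hx E f a b \<and>
     hx E' f' x (Inr n) + hx E' f' (Inr n) y - hx E f a b \<le> 1 - \<epsilon>"
proof -
  obtain a b where ab: "(a,b) \<in> E" "n div 2 = idx (a,b)" "x = Inl a \<or> x = Inl b" using nbr[OF x] by blast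
  have y': "adj E' y (Inr n)" using y unfolding adj_def by auto
  obtain a' b' where ab': "(a',b') \<in> E" "n div 2 = idx (a',b')" "y = Inl a' \<or> y = Inl b'" using nbr[OF y'] by blast
  have "a' = a \<and> b' = b" using idx_eq[OF ab(1) ab'(1)] ab(2) ab'(2) by simp
  then have yy: "y = Inl a \<or> y = Inl b" using ab'(3) by simp
  have neq: "a \<noteq> b" "(b,a) \<notin> E" using irr ab(1) by auto
  define c where "c = (if even n then \<epsilon> else 1 - \<epsilon>)"
  have c: "\<epsilon> \<le> c" "c \<le> 1 - \<epsilon>" "\<epsilon> \<le> 1 - c" "1 - c \<le> 1 - \<epsilon>" using eps by (auto simp: c_def)
  have fv: "f' (Inl a) (Inr n) = f a b + c" using f'_val[OF ab(1,2)] by (simp add: c_def)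
  have e1: "(Inl a, Inr n) \<in> E'" "(Inr n, Inl b) \<in> E'" using ab edgeL edgeR by blast+
  have e2: "(Inl b, Inr n) \<notin> E'"
  proof
    assume "(Inl b, Inr n) \<in> E'"
    then obtain b2 where "(b,b2) \<in> E" "n div 2 = idx (b,b2)" using edgeL by blast
    then show False using idx_eq[OF ab(1)] ab(2) neq by auto
  qed
  have e3: "(Inr n, Inl a) \<notin> E'"
  proof
    assume "(Inr n, Inl a) \<in> E'"
    then obtain a2 where "(a2,a) \<in> E" "n div 2 = idx (a2,a)" using edgeR by blast
    then show False using idx_eq[OF ab(1)] ab(2) neq by auto
  qed
  have adjab: "adj E a b" "adj E b a" using ab(1) by (auto simp: adj_def)
  show ?thesis
  proof (cases "x = Inl a")
    case True
    then have "y = Inl b" using xy yy by auto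
    moreover have "hx E' f' x (Inr n) + hx E' f' (Inr n) y - hx E f a b = c"
      using True e1 fv \<open>y = Inl b\<close> ab(1) by (simp add: hx_def f'_R)
    ultimately show ?thesis using True c adjab by auto
  next
    case False
    then have xb: "x = Inl b" and ya: "y = Inl a" using ab(3) xy yy by auto
    have "hx E' f' x (Inr n) + hx E' f' (Inr n) y - hx E f b a = 1 - c"
      using xb ya e2 e3 fv neq by (simp add: hx_def f'_R)
    then show ?thesis using xb ya c adjab by auto
  qed
qed

lemma chain:
  "successively (adj E') xs \<Longrightarrow> nb xs \<Longrightarrow> xs \<noteq> [] \<Longrightarrow> isl (hd xs) \<Longrightarrow> isl (last xs) \<Longrightarrow>
   length xs = 2 * length (ct xs) - 1 \<and> successively (adj E) (ct xs) \<and> ct xs \<noteq> [] \<and>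
   pw E f (ct xs) + \<epsilon> * (real (length (ct xs)) - 1) \<le> pw E' f' xs \<and>
   pw E' f' xs \<le> pw E f (ct xs) + (1 - \<epsilon>) * (real (length (ct xs)) - 1)"
proof (induction "length xs" arbitrary: xs rule: less_induct)
  case less
  show ?case
  proof (cases xs)
    case Nil then show ?thesis using less by simp
  next
    case (Cons x r)
    obtain a where xa: "x = Inl a" using less.prems(4) Cons by (cases x) auto
    show ?thesis
    proof (cases r)
      case Nil then show ?thesis using Cons xa by simp
    next
      case (Cons y r2)
      obtain n where yn: "y = Inr n"
        using less.prems(1) \<open>xs = x # r\<close> Cons xa noLL by (cases y) (auto simp: adj_def)
      have r2: "r2 \<noteq> []" using less.prems(5) \<open>xs = x # r\<close> Cons yn by auto
      then obtain z r3 where zr: "r2 = z # r3" by (cases r2) auto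
      have xs: "xs = x # y # z # r3" using \<open>xs = x # r\<close> Cons zr by simp
      have s: "adj E' x (Inr n)" "adj E' (Inr n) z" "successively (adj E') (z # r3)"
        using less.prems(1) xs yn by auto
      have "x \<noteq> z" using less.prems(2) xs by simp
      from mid[OF s(1,2) this] obtain a' b where ab: "x = Inl a'" "z = Inl b" "adj E a b"
        "\<epsilon> \<le> hx E' f' x (Inr n) + hx E' f' (Inr n) z - hx E f a b"
        "hx E' f' x (Inr n) + hx E' f' (Inr n) z - hx E f a b \<le> 1 - \<epsilon>"
        using xa by auto
      have IH: "length (z#r3) = 2 * length (ct (z#r3)) - 1 \<and> successively (adj E) (ct (z#r3)) \<and> ct (z#r3) \<noteq> [] \<and>
         pw E f (ct (z#r3)) + \<epsilon> * (real (length (ct (z#r3))) - 1) \<le> pw E' f' (z#r3) \<and>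
         pw E' f' (z#r3) \<le> pw E f (ct (z#r3)) + (1 - \<epsilon>) * (real (length (ct (z#r3))) - 1)"
        using less.hyps[of "z#r3"] xs s(3) less.prems(2,5) ab(2) by (cases r3) auto
      have ctz: "ct (z#r3) = b # ct r3" using ab(2) by simp
      have ctx: "ct xs = a # b # ct r3" using xs xa yn ab(2) by simp
      have pwx: "pw E' f' xs = hx E' f' x (Inr n) + hx E' f' (Inr n) z + pw E' f' (z#r3)"
        using xs yn by simp
      have pwc: "pw E f (ct xs) = hx E f a b + pw E f (ct (z#r3))" using ctx ctz by simp
      show ?thesis
        using IH ctx ctz pwx pwc ab(3,4,5) xs
        by (auto simp: algebra_simps)
    qed
  qed
qed


lemma hd_ct: "xs \<noteq> [] \<Longrightarrow> isl (hd xs) \<Longrightarrow> hd (ct xs) = projl (hd xs)"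
  by (cases xs) (auto simp: isl_def)

lemma last_ct: "xs \<noteq> [] \<Longrightarrow> isl (last xs) \<Longrightarrow> last (ct xs) = projl (last xs)"
proof (induction xs rule: rev_induct)
  case (snoc x xs) then show ?case by (auto simp: ct_def isl_def)
qed simp

lemma cyc_Inl:
  assumes cyc: "is_cycle E' cs" and h: "isl (hd cs)"
  shows "1 < curl E' f' cs \<and> curl E' f' cs < real (length cs) - 1"
proof -
  have l3: "length cs \<ge> 3" and dist: "distinct cs" and suc: "successively (adj E') (cs @ [hd cs])"
    using cyc is_cycle_alt by auto
  define xs where "xs = cs @ [hd cs]"
  have ne: "cs \<noteq> []" using l3 by auto
  have "nb xs" unfolding xs_def
  proof (rule nb_app[OF dist])
    have "cs!(length cs - 2) \<noteq> cs!0" using dist l3 by (subst nth_eq_iff_index_eq) auto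
    then show "hd cs \<noteq> cs!(length cs - 2)" using ne by (simp add: hd_conv_nth)
  qed
  from chain[OF suc[folded xs_def] this] h ne
  have C: "length xs = 2 * length (ct xs) - 1 \<and> successively (adj E) (ct xs) \<and> ct xs \<noteq> [] \<and>
   pw E f (ct xs) + \<epsilon> * (real (length (ct xs)) - 1) \<le> pw E' f' xs \<and>
   pw E' f' xs \<le> pw E f (ct xs) + (1 - \<epsilon>) * (real (length (ct xs)) - 1)"
    unfolding xs_def by simp
  obtain a where a: "hd cs = Inl a" using h by (cases "hd cs") auto
  define ds where "ds = ct cs"
  have ctx: "ct xs = ds @ [a]" using a by (simp add: xs_def ds_def)
  have l1: "length (ct xs) = length ds + 1" using ctx by simp
  have l2: "length xs = length cs + 1" by (simp add: xs_def)
  have lcs: "length cs = 2 * length ds" using C[THEN conjunct1] l1 l2 by simp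
  have k2: "length ds \<ge> 2" using lcs l3 by simp
  have hds: "hd ds = a" using hd_ct[OF ne h] a by (simp add: ds_def)
  have dds: "distinct ds" using ct_distinct[OF dist] by (simp add: ds_def)
  have sds: "successively (adj E) (ds @ [hd ds])" using C ctx hds by simp
  have curl': "curl E' f' cs = pw E' f' xs" using curl_pw ne by (simp add: xs_def Suc_le_eq)
  have curlG: "curl E f ds = pw E f (ct xs)" using curl_pw[of ds] k2 ctx hds by simp
  have lo: "curl E f ds + \<epsilon> * real (length ds) \<le> curl E' f' cs"
   and hi: "curl E' f' cs \<le> curl E f ds + (1 - \<epsilon>) * real (length ds)"
    using C curl' curlG ctx by auto
  show ?thesis
  proof (cases "length ds = 2")
    case True
    then obtain p q where pq: "ds = [p, q]"
      by (cases ds; cases "tl ds") auto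
    have "adj E p q" using sds pq by simp
    then have "curl E f ds = 1" using curl_pw[of ds] pq hx_sym[OF irr] by simp
    then show ?thesis using lo hi True lcs eps by simp
  next
    case False
    then have "is_cycle E ds" unfolding is_cycle_alt using k2 dds sds by auto
    then have "1 < curl E f ds" "curl E f ds < real (length ds) - 1"
      using cc unfolding curl_consistent_def by auto
    moreover have "real (length cs) = 2 * real (length ds)" using lcs by simp
    moreover have "0 \<le> \<epsilon> * real (length ds)" using eps by simp
    moreover have "curl E' f' cs \<le> curl E f ds + real (length ds) - \<epsilon> * real (length ds)"
      using hi by (simp add: algebra_simps)
    ultimately show ?thesis using lo by linarith
  qed
qed

lemma curl_cons': "curl_consistent E' f'"
  unfolding curl_consistent_def
proof (intro allI impI)
  fix cs assume cyc: "is_cycle E' cs"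
  show "1 < curl E' f' cs \<and> curl E' f' cs < real (length cs) - 1"
  proof (cases "isl (hd cs)")
    case True then show ?thesis using cyc_Inl cyc by blast
  next
    case False
    have l3: "length cs \<ge> 3" and dist: "distinct cs" and suc: "successively (adj E') (cs @ [hd cs])"
      using cyc is_cycle_alt by auto
    then obtain x r where xr: "cs = x # r" and rne: "r \<noteq> []" by (cases cs; cases "tl cs") auto
    obtain n where xn: "x = Inr n" using False xr by (cases x) auto
    have s: "adj E' x (hd r)" "successively (adj E') (r @ [x])"
      using suc xr rne by (auto simp: successively_Cons)
    have "isl (hd r)" using s(1) xn noRR by (cases "hd r") (auto simp: adj_def)
    moreover have "is_cycle E' (r @ [x])"
      unfolding is_cycle_alt using l3 dist xr rne s
      by (auto simp: successively_append_iff)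
    moreover have "hd (r @ [x]) = hd r" using rne by simp
    ultimately have "1 < curl E' f' (r @ [x]) \<and> curl E' f' (r @ [x]) < real (length (r @ [x])) - 1"
      using cyc_Inl[of "r @ [x]"] by simp
    moreover have "curl E' f' (r @ [x]) = curl E' f' cs"
    proof -
      have "curl E' f' (r @ [x]) = pw E' f' ((r @ [x]) @ [hd r])" using curl_pw[of "r @ [x]"] rne by simp
      also have "\<dots> = pw E' f' (r @ [x]) + hx E' f' x (hd r)" using pw_append[of "r @ [x]" "[hd r]"] by simp
      also have "\<dots> = pw E' f' ([x] @ (r @ [x]))" using pw_append[of "[x]" "r @ [x]"] rne by (simp add: hd_append)
      also have "\<dots> = curl E' f' cs" using curl_pw[of cs] xr by simp
      finally show ?thesis .
    qed
    ultimately show ?thesis using xr by simp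
  qed
qed

lemma path_lower:
  assumes xy: "adj E x y" and p: "xs \<in> paths_between E' (Inl x) (Inl y)"
  shows "hx E f x y + \<epsilon> \<le> pw E' f' xs"
proof -
  have ne: "xs \<noteq> []" and dist: "distinct xs" and suc: "successively (adj E') xs"
    and hx: "hd xs = Inl x" and lx: "last xs = Inl y"
    using p by (auto simp: paths_between_def is_path_alt)
  from chain[OF suc nb_distinct[OF dist] ne] hx lx
  have C: "successively (adj E) (ct xs) \<and> ct xs \<noteq> [] \<and>
   pw E f (ct xs) + \<epsilon> * (real (length (ct xs)) - 1) \<le> pw E' f' xs" by simp
  define ds where "ds = ct xs"
  have hd: "hd ds = x" using hd_ct[OF ne] hx by (simp add: ds_def)
  have ld: "last ds = y" using last_ct[OF ne] lx by (simp add: ds_def)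
  have dds: "distinct ds" using ct_distinct[OF dist] by (simp add: ds_def)
  have xney: "x \<noteq> y" using xy irr by (auto simp: adj_def)
  have dne: "ds \<noteq> []" using C by (simp add: ds_def)
  have k2: "length ds \<ge> 2"
  proof (rule ccontr)
    assume "\<not> length ds \<ge> 2"
    moreover have "length ds \<noteq> 0" using dne by simp
    ultimately have "length ds = 1" by linarith
    then have "hd ds = last ds" by (cases ds) auto
    then show False using hd ld xney by simp
  qed
  show ?thesis
  proof (cases "length ds = 2")
    case True
    then obtain p q where pq: "ds = [p, q]" by (cases ds; cases "tl ds") auto
    then show ?thesis using C hd ld by (simp add: ds_def[symmetric])
  next
    case False
    have sds: "successively (adj E) (ds @ [hd ds])"
      using C hd ld xy dne by (simp add: ds_def[symmetric] successively_append_iff adj_def) blast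
    have "is_cycle E ds" unfolding is_cycle_alt using False k2 dds sds by auto
    then have "1 < curl E f ds" using cc unfolding curl_consistent_def by auto
    moreover have "curl E f ds = pw E f ds + hx E f y x"
      using curl_pw[of ds] pw_append[of ds "[x]"] k2 hd ld dne by simp
    moreover have "hx E f x y + hx E f y x = 1" using hx_sym[OF irr xy] .
    ultimately have "pw E f ds > hx E f x y" by simp
    moreover have "\<epsilon> * (real (length ds) - 1) \<ge> \<epsilon>" using eps k2 by simp
    ultimately show ?thesis using C by (simp add: ds_def[symmetric])
  qed
qed


lemma noback: "(Inl c, Inr n) \<in> E' \<Longrightarrow> (Inr n, Inl c) \<notin> E'"
proof
  assume "(Inl c, Inr n) \<in> E'" "(Inr n, Inl c) \<in> E'"
  then obtain d e where "(c,d) \<in> E" "n div 2 = idx (c,d)" "(e,c) \<in> E" "n div 2 = idx (e,c)"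
    using edgeL edgeR by blast
  then show False using idx_eq[of c d e c] irr by auto
qed

lemma bounds:
  assumes ab: "(a,b) \<in> E"
  shows "U_bound E' f' (Inl a) (Inl b) = ereal (f a b + \<epsilon>) \<and> L_bound E' f' (Inl a) (Inl b) = ereal (f a b - \<epsilon>)"
proof -
  have neq: "a \<noteq> b" "(b,a) \<notin> E" using irr ab by auto
  define n where "n = 2 * idx (a,b)"
  define m where "m = 2 * idx (a,b) + 1"
  have nd: "n div 2 = idx (a,b)" "m div 2 = idx (a,b)" "even n" "odd m" by (auto simp: n_def m_def)
  have e1: "(Inl a, Inr n) \<in> E'" "(Inr n, Inl b) \<in> E'" "(Inl a, Inr m) \<in> E'" "(Inr m, Inl b) \<in> E'"
    using ab nd edgeL edgeR by blast+
  have e2: "(Inl b, Inr m) \<notin> E'" "(Inr m, Inl a) \<notin> E'" using noback e1 by blast+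
  have p1: "[Inl a, Inr n, Inl b] \<in> paths_between E' (Inl a) (Inl b)"
    using e1 neq by (auto simp: paths_between_def is_path_alt adj_def)
  have p2: "[Inl b, Inr m, Inl a] \<in> paths_between E' (Inl b) (Inl a)"
    using e1 neq by (auto simp: paths_between_def is_path_alt adj_def)
  have w1: "pw E' f' [Inl a, Inr n, Inl b] = f a b + \<epsilon>"
    using e1 f'_val[OF ab nd(1)] nd by (simp add: hx_def f'_R)
  have w2: "pw E' f' [Inl b, Inr m, Inl a] = 1 - f a b + \<epsilon>"
    using e2 f'_val[OF ab nd(2)] nd by (simp add: hx_def f'_R)
  have adj1: "adj E a b" "adj E b a" using ab by (auto simp: adj_def)
  have hx1: "hx E f a b = f a b" "hx E f b a = 1 - f a b" using ab neq by (auto simp: hx_def)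
  have U: "U_bound E' f' (Inl a) (Inl b) = ereal (f a b + \<epsilon>)"
    unfolding U_bound_def path_weight_pw
  proof (rule antisym)
    show "(INF xs\<in>paths_between E' (Inl a) (Inl b). ereal (pw E' f' xs)) \<le> ereal (f a b + \<epsilon>)"
      using INF_lower[OF p1, of "\<lambda>xs. ereal (pw E' f' xs)"] w1 by simp
    show "ereal (f a b + \<epsilon>) \<le> (INF xs\<in>paths_between E' (Inl a) (Inl b). ereal (pw E' f' xs))"
      by (rule INF_greatest) (use path_lower[OF adj1(1)] hx1 in auto)
  qed
  have V: "(INF xs\<in>paths_between E' (Inl b) (Inl a). ereal (path_weight E' f' xs)) = ereal (1 - f a b + \<epsilon>)"
    unfolding path_weight_pw
  proof (rule antisym)
    show "(INF xs\<in>paths_between E' (Inl b) (Inl a). ereal (pw E' f' xs)) \<le> ereal (1 - f a b + \<epsilon>)"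
      using INF_lower[OF p2, of "\<lambda>xs. ereal (pw E' f' xs)"] w2 by simp
    show "ereal (1 - f a b + \<epsilon>) \<le> (INF xs\<in>paths_between E' (Inl b) (Inl a). ereal (pw E' f' xs))"
      by (rule INF_greatest) (use path_lower[OF adj1(2)] hx1 in auto)
  qed
  have L: "L_bound E' f' (Inl a) (Inl b) = ereal (f a b - \<epsilon>)"
    unfolding L_bound_def V by (simp add: one_ereal_def)
  show ?thesis using U L by simp
qed

end

theorem lemma4:
  fixes Y :: "'a set" and E :: "('a \<times> 'a) set" and f :: "'a \<Rightarrow> 'a \<Rightarrow> real" and \<zeta> :: real
  assumes "\<zeta> > 0" and "wdigraph Y E" and "curl_consistent E f"
  shows "\<exists>(Y' :: ('a + nat) set) E' f'.
           Y' \<inter> Inl ` Y = {} \<and>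
           wdigraph (Inl ` Y \<union> Y') E' \<and>
           (\<lambda>(a,b). (Inl a, Inl b)) ` E \<inter> E' = {} \<and>
           (\<forall>(a,b)\<in>E. zeta_accurate E' f' \<zeta> (Inl a) (Inl b) \<and>
                L_bound E' f' (Inl a) (Inl b) < ereal (f a b) \<and>
                ereal (f a b) < U_bound E' f' (Inl a) (Inl b)) \<and>
           curl_consistent E' f'"
proof -
  have finY: "finite Y" and EY: "E \<subseteq> Y \<times> Y" and irr: "\<forall>(a,b)\<in>E. a \<noteq> b \<and> (b,a) \<notin> E"
    using assms(2) unfolding wdigraph_def by auto
  have "finite E" by (rule finite_subset[OF EY]) (simp add: finY)
  then obtain idx :: "'a \<times> 'a \<Rightarrow> nat" where inj: "inj_on idx E"
    using finite_imp_inj_to_nat_seg[OF \<open>finite E\<close>] by blast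
  define \<epsilon> :: real where "\<epsilon> = min (\<zeta>/2) (1/4)"
  have eps: "0 < \<epsilon>" "\<epsilon> \<le> 1/4" "2 * \<epsilon> \<le> \<zeta>" using assms(1) by (auto simp: \<epsilon>_def)
  define E' :: "(('a + nat) \<times> ('a + nat)) set" where
    "E' = {(Inl a, Inr n) | a n. \<exists>b. (a,b) \<in> E \<and> n div 2 = idx (a,b)}
                 \<union> {(Inr n, Inl b) | n b. \<exists>a. (a,b) \<in> E \<and> n div 2 = idx (a,b)}"
  define f' :: "'a + nat \<Rightarrow> 'a + nat \<Rightarrow> real" where
    "f' = (\<lambda>x y. case x of Inl a \<Rightarrow> (case y of Inr n \<Rightarrow>
          f (fst (inv_into E idx (n div 2))) (snd (inv_into E idx (n div 2))) + (if even n then \<epsilon> else 1 - \<epsilon>)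
          | Inl _ \<Rightarrow> 0) | Inr _ \<Rightarrow> 0)"
  interpret G: gad E f idx \<epsilon> E' f'
    apply (rule gad.intro)
    using irr assms(3) eps inj by (simp_all only: E'_def f'_def)
  define Y' :: "('a + nat) set" where "Y' = {Inr n | n. \<exists>e\<in>E. n div 2 = idx e}"
  have finY': "finite Y'"
  proof (rule finite_subset)
    show "Y' \<subseteq> Inr ` (\<Union>e\<in>E. {..<2 * idx e + 2})"
    proof
      fix y assume "y \<in> Y'"
      then obtain n e where y: "y = Inr n" "e \<in> E" "n div 2 = idx e" unfolding Y'_def by blast
      have "n < 2 * idx e + 2" using y(3) by linarith
      then show "y \<in> Inr ` (\<Union>e\<in>E. {..<2 * idx e + 2})" using y by blast
    qed
    show "finite (Inr ` (\<Union>e\<in>E. {..<2 * idx e + 2}))" using \<open>finite E\<close> by simp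
  qed
  have wd: "wdigraph (Inl ` Y \<union> Y') E'"
    unfolding wdigraph_def
  proof (intro conjI)
    show "finite (Inl ` Y \<union> Y')" using finY finY' by simp
    show "E' \<subseteq> (Inl ` Y \<union> Y') \<times> (Inl ` Y \<union> Y')"
    proof
      fix p assume "p \<in> E'"
      then consider a n b where "p = (Inl a, Inr n)" "(a,b) \<in> E" "n div 2 = idx (a,b)"
        | n a b where "p = (Inr n, Inl b)" "(a,b) \<in> E" "n div 2 = idx (a,b)"
        unfolding E'_def by blast
      then show "p \<in> (Inl ` Y \<union> Y') \<times> (Inl ` Y \<union> Y')"
      proof cases
        case 1
        then have "Inr n \<in> Y'" unfolding Y'_def by blast
        moreover have "a \<in> Y" using 1 EY by blast
        ultimately show ?thesis using 1 by blast
      next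
        case 2
        then have "Inr n \<in> Y'" unfolding Y'_def by blast
        moreover have "b \<in> Y" using 2 EY by blast
        ultimately show ?thesis using 2 by blast
      qed
    qed
    show "\<forall>(a, b)\<in>E'. a \<noteq> b \<and> (b, a) \<notin> E'"
    proof (intro ballI, clarify)
      fix u v assume uv: "(u, v) \<in> E'"
      show "u \<noteq> v \<and> (v, u) \<notin> E'"
      proof (cases u)
        case (Inl c)
        then obtain n where "v = Inr n" using uv G.noLL by (cases v) auto
        then show ?thesis using uv Inl G.noback by auto
      next
        case (Inr n)
        then obtain c where "v = Inl c" using uv G.noRR by (cases v) auto
        then show ?thesis using uv Inr G.noback by auto
      qed
    qed
  qed
  have disj: "(\<lambda>(a,b). (Inl a, Inl b)) ` E \<inter> E' = {}" using G.noLL by auto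
  have main: "\<forall>(a,b)\<in>E. zeta_accurate E' f' \<zeta> (Inl a) (Inl b) \<and>
                L_bound E' f' (Inl a) (Inl b) < ereal (f a b) \<and>
                ereal (f a b) < U_bound E' f' (Inl a) (Inl b)"
  proof (intro ballI, clarify)
    fix a b assume ab: "(a,b) \<in> E"
    have B: "U_bound E' f' (Inl a) (Inl b) = ereal (f a b + \<epsilon>)" "L_bound E' f' (Inl a) (Inl b) = ereal (f a b - \<epsilon>)"
      using G.bounds[OF ab] by auto
    have "\<not> adj E' (Inl a) (Inl b)" using G.noLL by (auto simp: adj_def)
    then show "zeta_accurate E' f' \<zeta> (Inl a) (Inl b) \<and>
                L_bound E' f' (Inl a) (Inl b) < ereal (f a b) \<and>
                ereal (f a b) < U_bound E' f' (Inl a) (Inl b)"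
      using B eps by (simp add: zeta_accurate_def)
  qed
  have "Y' \<inter> Inl ` Y = {}" unfolding Y'_def by auto
  then show ?thesis
    apply (intro exI[of _ Y'] exI[of _ E'] exI[of _ f'])
    using wd disj main G.curl_cons' by (intro conjI)
qed

end
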